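(* Let $a\in\mathbb{C}$ and let $\mathcal{DC}_a=\{(z,\,az+\tfrac{1}{z})\in\mathbb{C}^2 : z\in\mathbb{C}\setminus\{0\}\}\subset\mathbb{C}^2\cong\mathbb{R}^4$. Then the only smooth simple closed curves on $\mathcal{DC}_a$ that lie in a $2$-dimensional affine plane of $\mathbb{R}^4$ are the images of the circles $\{z=re^{i\theta}: 0\le\theta\le 2\pi\}$, $r>0$, under the map $z\mapsto (z,az+1/z)$.
   Context: $\mathbb{C}^2$ is identified with $\mathbb{R}^4$ via $(z,w)\leftrightarrow(\mathrm{Re}\,z,\mathrm{Im}\,z,\mathrm{Re}\,w,\mathrm{Im}\,w)$. *)

theory Defs
  imports "HOL-Analysis.Analysis"
begin

text \<open>C^2 is the real vector space complex \<times> complex, identified with R^4 via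
  (z,w) \<mapsto> (Re z, Im z, Re w, Im w) (a real-linear isometry, so affine notions agree).\<close>

definition DC_map :: "complex \<Rightarrow> complex \<Rightarrow> complex \<times> complex" where
  "DC_map a z = (z, a * z + 1 / z)"

definition DC :: "complex \<Rightarrow> (complex \<times> complex) set" where
  "DC a = DC_map a ` (UNIV - {0})"

definition smooth_curve :: "(real \<Rightarrow> 'a::real_normed_vector) \<Rightarrow> bool" where
  "smooth_curve \<gamma> \<longleftrightarrow> (\<exists>D :: nat \<Rightarrow> real \<Rightarrow> 'a. D 0 = \<gamma> \<and>
      (\<forall>n t. (D n has_vector_derivative D (Suc n) t) (at t)))"

definition smooth_simple_closed_curve :: "(real \<Rightarrow> 'a::real_normed_vector) \<Rightarrow> bool" where
  "smooth_simple_closed_curve \<gamma> \<longleftrightarrow>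
     smooth_curve \<gamma> \<and>
     (\<forall>t. \<gamma> (t + 1) = \<gamma> t) \<and>
     inj_on \<gamma> {0..<1} \<and>
     (\<forall>t. vector_derivative \<gamma> (at t) \<noteq> 0)"

end

theory Submission imports Defs "HOL-Computational_Algebra.Polynomial" begin


lemma plane_param:
  fixes P :: "(complex\<times>complex) set"
  assumes "affine P" "aff_dim P = 2"
  obtains p0 u v where "\<forall>x\<in>P. \<exists>s t::real. x = p0 + s *\<^sub>R u + t *\<^sub>R v"
proof -
  have "P \<noteq> {}" using assms(2) by auto
  then obtain p0 where p0: "p0 \<in> P" by auto
  define S where "S = (+) (- p0) ` P"
  have "aff_dim P = int (dim S)" unfolding S_def
    by (rule aff_dim_eq_dim) (simp add: hull_inc p0)
  then have dS: "dim S = 2" using assms(2) by simp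
  obtain B where B: "B \<subseteq> S" "independent B" "S \<subseteq> span B" "card B = dim S"
    using basis_exists by blast
  then obtain u v where uv: "B = {u, v}" using dS by (metis card_2_iff)
  have "\<exists>s t::real. x = p0 + s *\<^sub>R u + t *\<^sub>R v" if "x \<in> P" for x
  proof -
    have "- p0 + x \<in> span {u, v}" using B(3) uv that unfolding S_def by auto
    then obtain s t where "- p0 + x - s *\<^sub>R u - t *\<^sub>R v = 0"
      unfolding span_insert span_singleton by auto
    then have "x = p0 + s *\<^sub>R u + t *\<^sub>R v" by (simp add: algebra_simps)
    then show ?thesis by blast
  qed
  then show ?thesis using that by blast
qed

lemma no_inj_loop:
  fixes g :: "real \<Rightarrow> real"
  assumes c: "\<And>x. isCont g x" and p: "g 0 = g 1" and i: "inj_on g {0..<1}"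
  shows False
proof -
  have ne: "g 0 \<noteq> g (1/2)" using i by (auto dest: inj_onD)
  have key: False if H: "h 0 < h (1/2)" "h 0 = h 1" "inj_on h {0..<1}" "\<And>x. isCont h x" for h :: "real \<Rightarrow> real"
  proof -
    define y where "y = (h 0 + h (1/2)) / 2"
    obtain s where s: "0 \<le> s" "s \<le> 1/2" "h s = y"
      using IVT[of h 0 y "1/2"] H y_def by force
    obtain u where u: "1/2 \<le> u" "u \<le> 1" "h u = y"
      using IVT2[of h 1 y "1/2"] H y_def by force
    have "u \<noteq> 1/2" proof assume "u = 1/2" then have "h (1/2) = y" using u(3) by (metis) then show False using y_def H(1) by simp qed
    then have "s \<noteq> u" using s u by auto
    moreover have "u \<noteq> 1" using u y_def H by auto
    ultimately show False using H(3) s u by (auto dest: inj_onD[of h _ s u])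
  qed
  show False
  proof (cases "g 0 < g (1/2)")
    case True then show ?thesis using key[of g] p i c by blast
  next
    case False
    then have "(\<lambda>x. - g x) 0 < (\<lambda>x. - g x) (1/2)" using ne by auto
    moreover have "inj_on (\<lambda>x. - g x) {0..<1}" using i by (auto simp: inj_on_def)
    ultimately show ?thesis using key[of "\<lambda>x. - g x"] p c by auto
  qed
qed


lemma circle_alg:
  fixes Z :: "complex set" and A B c :: complex
  assumes inf: "infinite Z" and h: "\<And>z. z\<in>Z \<Longrightarrow> z \<noteq> 0 \<and> A*z^2 + B*(z*cnj z) + c*z = 1"
  shows "\<exists>r>0. \<forall>z\<in>Z. norm z = r"
proof (cases "B = 0")
  case True
  have "Z \<subseteq> {x. poly [:-1, c, A:] x = 0}"
    using h True by (auto simp: algebra_simps power2_eq_square)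
  moreover have "[:-1, c, A:] \<noteq> 0" by simp
  ultimately show ?thesis using inf poly_roots_finite finite_subset by blast
next
  case False
  define a2 where "a2 = -A/B"
  define a1 where "a1 = -c/B"
  define a0 where "a0 = 1/B"
  define p where "p = (\<lambda>z. a2*z^2 + a1*z + a0)"
  have a0: "a0 \<noteq> 0" using False by (simp add: a0_def)
  have rho: "z * cnj z = p z" if "z \<in> Z" for z
    using h[OF that] False unfolding p_def a2_def a1_def a0_def
    by (auto simp: field_simps)
  have Qz: "z^2 * p z - cnj a2 * (p z)^2 - cnj a1 * z * p z - cnj a0 * z^2 = 0" if "z \<in> Z" for z
  proof -
    have z0: "z \<noteq> 0" using h[OF that] by simp
    have r: "z * cnj z = p z" using rho[OF that] .
    have cz: "cnj z = p z / z" using r z0 by (simp add: field_simps)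
    have "cnj (z * cnj z) = z * cnj z" by simp
    then have "cnj (p z) = p z" using r by simp
    then have "cnj a2 * (cnj z)^2 + cnj a1 * cnj z + cnj a0 = p z"
      unfolding p_def by simp
    then have "cnj a2 * (p z / z)^2 + cnj a1 * (p z / z) + cnj a0 = p z" using cz by simp
    then have "z^2 * (cnj a2 * (p z / z)^2 + cnj a1 * (p z / z) + cnj a0) = z^2 * p z" by simp
    moreover have "z^2 * (cnj a2 * (p z / z)^2) = cnj a2 * (p z)^2"
      using z0 by (simp add: power_divide)
    moreover have "z^2 * (cnj a1 * (p z / z)) = cnj a1 * z * p z"
      using z0 by (simp add: power2_eq_square)
    ultimately have "cnj a2 * (p z)^2 + cnj a1 * z * p z + cnj a0 * z^2 = z^2 * p z"
      by (simp add: distrib_left mult.commute)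
    then show ?thesis by (simp add: algebra_simps)
  qed
  define q0 where "q0 = - cnj a2 * a0^2"
  define q1 where "q1 = - 2 * cnj a2 * a1 * a0 - cnj a1 * a0"
  define q2 where "q2 = a0 - cnj a2 * (a1^2 + 2*a2*a0) - cnj a1 * a1 - cnj a0"
  define q3 where "q3 = a1 - 2 * cnj a2 * a2 * a1 - cnj a1 * a2"
  define q4 where "q4 = a2 - cnj a2 * a2^2"
  have pq: "poly [:q0,q1,q2,q3,q4:] z = z^2 * p z - cnj a2 * (p z)^2 - cnj a1 * z * p z - cnj a0 * z^2" for z
    unfolding q0_def q1_def q2_def q3_def q4_def p_def
    by (simp add: algebra_simps power2_eq_square power3_eq_cube power4_eq_xxxx)
  have "Z \<subseteq> {x. poly [:q0,q1,q2,q3,q4:] x = 0}" using Qz pq by auto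
  then have "[:q0,q1,q2,q3,q4:] = 0" using inf poly_roots_finite finite_subset by blast
  then have "q0 = 0" "q1 = 0" by simp_all
  then have "a2 = 0" "a1 = 0" using a0 unfolding q0_def q1_def by auto
  then have rz: "z * cnj z = a0" if "z \<in> Z" for z using rho[OF that] p_def by simp
  obtain z0 where z0: "z0 \<in> Z" using inf by (metis ex_in_conv finite.emptyI)
  have "norm z = norm z0" if "z \<in> Z" for z
  proof -
    have "complex_of_real ((norm z)^2) = complex_of_real ((norm z0)^2)"
      using rz[OF that] rz[OF z0] complex_norm_square by (metis of_real_power)
    then have "(norm z)^2 = (norm z0)^2" using of_real_eq_iff by blast
    then show ?thesis by (simp add: power2_eq_iff_nonneg)
  qed
  moreover have "norm z0 > 0" using h[OF z0] by simp
  ultimately show ?thesis by blast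
qed


lemma im_lin1: "Im (cnj x * (of_real s * x + of_real t * y)) = t * Im (cnj x * y)"
  by (simp add: algebra_simps)
lemma im_lin2: "Im (cnj y * (of_real s * x + of_real t * y)) = - s * Im (cnj x * y)"
  by (simp add: algebra_simps)
lemma Im_conv: "complex_of_real (Im y) = (y - cnj y) / (2*\<i>)"
  by (simp add: complex_eq_iff)

lemma lin_solve:
  fixes u1 v1 u2 v2 z0 w0 z w :: complex and s t Dd :: real
  assumes D: "Dd = Im (cnj u1 * v1)" "Dd \<noteq> 0"
    and z: "z = z0 + of_real s * u1 + of_real t * v1"
    and w: "w = w0 + of_real s * u2 + of_real t * v2"
  shows "w = ((v2 * cnj u1 - u2 * cnj v1) / (2*\<i>*Dd)) * z + ((u2 * v1 - v2 * u1) / (2*\<i>*Dd)) * cnj z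
     + (w0 - ((v2 * cnj u1 - u2 * cnj v1) / (2*\<i>*Dd)) * z0 - ((u2 * v1 - v2 * u1) / (2*\<i>*Dd)) * cnj z0)"
proof -
  have x: "z - z0 = of_real s * u1 + of_real t * v1" using z by simp
  have t: "t = Im (cnj u1 * (z - z0)) / Dd" using D x im_lin1[of u1 s t v1] by simp
  have s: "s = - Im (cnj v1 * (z - z0)) / Dd" using D x im_lin2[of v1 s u1 t] by simp
  have gen: "\<And>A B::real. w0 + of_real (- A / Dd) * u2 + of_real (B / Dd) * v2 = w0 - (of_real A * u2) / of_real Dd + (of_real B * v2) / of_real Dd"
    by (simp add: field_simps)
  have "w = w0 + of_real (- Im (cnj v1 * (z - z0)) / Dd) * u2 + of_real (Im (cnj u1 * (z - z0)) / Dd) * v2"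
    using w s t by simp
  also have "\<dots> = w0 - (of_real (Im (cnj v1 * (z - z0))) * u2) / of_real Dd + (of_real (Im (cnj u1 * (z - z0))) * v2) / of_real Dd"
    using gen by blast
  also have "\<dots> = w0 - ((cnj v1 * (z - z0) - cnj (cnj v1 * (z - z0))) / (2*\<i>) * u2) / of_real Dd
       + ((cnj u1 * (z - z0) - cnj (cnj u1 * (z - z0))) / (2*\<i>) * v2) / of_real Dd"
    by (simp only: Im_conv)
  also have "\<dots> = ((v2 * cnj u1 - u2 * cnj v1) / (2*\<i>*Dd)) * z + ((u2 * v1 - v2 * u1) / (2*\<i>*Dd)) * cnj z
     + (w0 - ((v2 * cnj u1 - u2 * cnj v1) / (2*\<i>*Dd)) * z0 - ((u2 * v1 - v2 * u1) / (2*\<i>*Dd)) * cnj z0)"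
    using D(2) by (simp add: field_simps)
  finally show ?thesis .
qed


theorem lemma2p1:
  fixes a :: complex and \<gamma> :: "real \<Rightarrow> complex \<times> complex"
  assumes "smooth_simple_closed_curve \<gamma>"
    and "range \<gamma> \<subseteq> DC a"
    and "\<exists>P :: (complex \<times> complex) set. affine P \<and> aff_dim P = 2 \<and> range \<gamma> \<subseteq> P"
  shows "\<exists>r>0. range \<gamma> = DC_map a ` sphere 0 r"
proof -
  obtain D where D: "D 0 = \<gamma>" "\<And>n t. (D n has_vector_derivative D (Suc n) t) (at t)"
    using assms(1) unfolding smooth_simple_closed_curve_def smooth_curve_def by blast
  have gc: "isCont \<gamma> t" for t using has_vector_derivative_continuous[OF D(2)[of 0 t]] D(1) by simp
  have per: "\<gamma> 1 = \<gamma> 0" using assms(1) unfolding smooth_simple_closed_curve_def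
    by (metis add_0)
  have ginj: "inj_on \<gamma> {0..<1}" using assms(1) unfolding smooth_simple_closed_curve_def by blast
  define z where "z = (\<lambda>t. fst (\<gamma> t))"
  have gz: "\<gamma> t = DC_map a (z t) \<and> z t \<noteq> 0" for t
  proof -
    have "\<gamma> t \<in> DC a" using assms(2) by auto
    then obtain x where "x \<noteq> 0" "\<gamma> t = DC_map a x" unfolding DC_def by auto
    then show ?thesis unfolding z_def DC_map_def by simp
  qed
  have zc: "isCont z t" for t unfolding z_def using gc by simp
  have z1: "z 1 = z 0" unfolding z_def using per by simp
  have zinj: "inj_on z {0..<1}"
  proof (rule inj_onI)
    fix s t assume "s \<in> {0..<1}" "t \<in> {0..<1}" "z s = z t"
    then show "s = t" using gz[of s] gz[of t] ginj by (metis inj_onD)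
  qed
  have zinf: "infinite (range z)"
  proof
    assume "finite (range z)"
    then have "finite (z ` {0..<1})" by (meson finite_subset image_mono subset_UNIV)
    then have "finite {0..<(1::real)}" using zinj finite_image_iff by blast
    then show False using infinite_Ico[of "0::real" 1] by simp
  qed
  obtain P where P: "affine P" "aff_dim P = 2" "range \<gamma> \<subseteq> P" using assms(3) by blast
  obtain p0 u v where puv: "\<forall>x\<in>P. \<exists>s t::real. x = p0 + s *\<^sub>R u + t *\<^sub>R v"
    using plane_param[OF P(1,2)] by blast
  define z0 where "z0 = fst p0"
  define w0 where "w0 = snd p0"
  define u1 where "u1 = fst u"
  define u2 where "u2 = snd u"
  define v1 where "v1 = fst v"
  define v2 where "v2 = snd v"
  define Dd where "Dd = Im (cnj u1 * v1)"
  have st: "\<exists>s t::real. z x = z0 + of_real s * u1 + of_real t * v1 \<and>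
       a * z x + 1 / z x = w0 + of_real s * u2 + of_real t * v2" for x
  proof -
    obtain s t where e: "\<gamma> x = p0 + s *\<^sub>R u + t *\<^sub>R v" using puv P(3) by blast
    have "fst (\<gamma> x) = z0 + of_real s * u1 + of_real t * v1"
      "snd (\<gamma> x) = w0 + of_real s * u2 + of_real t * v2"
      unfolding e z0_def w0_def u1_def u2_def v1_def v2_def by (simp_all add: scaleR_conv_of_real)
    moreover have "snd (\<gamma> x) = a * z x + 1 / z x" using gz[of x] by (simp add: DC_map_def)
    ultimately show ?thesis unfolding z_def by metis
  qed
  have circ: "\<exists>r>0. \<forall>y\<in>range z. norm y = r"
  proof (cases "Dd = 0")
    case False
    define \<alpha> where "\<alpha> = (v2 * cnj u1 - u2 * cnj v1) / (2*\<i>*Dd)"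
    define \<beta> where "\<beta> = (u2 * v1 - v2 * u1) / (2*\<i>*Dd)"
    define c where "c = w0 - \<alpha> * z0 - \<beta> * cnj z0"
    have "y \<noteq> 0 \<and> (\<alpha> - a) * y^2 + \<beta> * (y * cnj y) + c * y = 1" if "y \<in> range z" for y
    proof -
      obtain x where y: "y = z x" using \<open>y \<in> range z\<close> by auto
      obtain s t where e: "z x = z0 + of_real s * u1 + of_real t * v1"
         "a * z x + 1 / z x = w0 + of_real s * u2 + of_real t * v2" using st by blast
      have "a * z x + 1 / z x = \<alpha> * z x + \<beta> * cnj (z x) + c"
        using lin_solve[OF Dd_def False e] unfolding \<alpha>_def \<beta>_def c_def by simp
      moreover have "y \<noteq> 0" using gz y by simp
      ultimately show ?thesis using y by (simp add: field_simps power2_eq_square)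
    qed
    then show ?thesis using circle_alg[OF zinf] by blast
  next
    case True
    have im0: "Im (cnj u1 * (z x - z0)) = 0 \<and> Im (cnj v1 * (z x - z0)) = 0" for x
    proof -
      obtain s t where e: "z x = z0 + of_real s * u1 + of_real t * v1" using st by blast
      then have x: "z x - z0 = of_real s * u1 + of_real t * v1" by simp
      show ?thesis unfolding x im_lin1 im_lin2 using True Dd_def by simp
    qed
    define d where "d = (if u1 \<noteq> 0 then u1 else v1)"
    have imd: "Im (cnj d * (z x - z0)) = 0" for x using im0 d_def by simp
    show ?thesis
    proof (cases "d = 0")
      case True
      then have "u1 = 0" "v1 = 0" unfolding d_def by (auto split: if_splits)
      then have "z x = z0" for x using st by force
      then have "z 0 = z (1/2)" by simp
      then show ?thesis using zinj by (auto dest: inj_onD)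
    next
      case False
      define g where "g = (\<lambda>x. Re (cnj d * (z x - z0)))"
      have "isCont g x" for x unfolding g_def by (rule isCont_Re) (intro continuous_intros zc)
      moreover have "g 0 = g 1" unfolding g_def using z1 by simp
      moreover have "inj_on g {0..<1}"
      proof (rule inj_onI)
        fix s t assume st: "s \<in> {0..<1}" "t \<in> {0..<1}" "g s = g t"
        then have "cnj d * (z s - z0) = cnj d * (z t - z0)"
          using imd[of s] imd[of t] unfolding g_def by (simp add: complex_eq_iff)
        then have "z s = z t" using False by simp
        then show "s = t" using zinj st by (auto dest: inj_onD)
      qed
      ultimately show ?thesis using no_inj_loop by blast
    qed
  qed
  then obtain r where r: "r > 0" "\<And>x. norm (z x) = r" by blast
  have surj: "\<exists>t. z t = p" if p: "norm p = r" for p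
  proof (rule ccontr)
    assume nz: "\<not> (\<exists>t. z t = p)"
    have p0: "p \<noteq> 0" using p r by auto
    define g where "g = (\<lambda>t. Arg (- z t / p))"
    have n1: "norm (- z t / p) = 1" for t using r p p0 by (simp add: norm_divide)
    have "isCont g x" for x
    proof -
      have "- z x / p \<notin> \<real>\<^sub>\<le>\<^sub>0"
      proof
        assume "- z x / p \<in> \<real>\<^sub>\<le>\<^sub>0"
        then obtain q where q: "- z x / p = of_real q" "q \<le> 0" by (rule nonpos_Reals_cases) blast
        then have "norm (of_real q :: complex) = 1" using n1 by metis
        then have "q = -1" using q(2) by simp
        then have "z x = p" using q(1) p0 by (simp add: field_simps)
        then show False using nz by blast
      qed
      then have "isCont Arg (- z x / p)" using continuous_at_Arg by blast
      moreover have "isCont (\<lambda>t. - z t / p) x" using p0 by (intro continuous_intros zc) auto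
      ultimately show ?thesis unfolding g_def by (metis isCont_o2)
    qed
    moreover have "g 0 = g 1" unfolding g_def using z1 by simp
    moreover have "inj_on g {0..<1}"
    proof (rule inj_onI)
      fix s t assume st: "s \<in> {0..<1}" "t \<in> {0..<1}" "g s = g t"
      have "- z s / p \<noteq> 0" "- z t / p \<noteq> 0" using n1[of s] n1[of t] by auto
      then have "- z s / p = - z t / p"
        using Arg_eq[of "- z s / p"] Arg_eq[of "- z t / p"] n1[of s] n1[of t] st(3)
        unfolding g_def by metis
      then have "z s = z t" using p0 by (simp add: field_simps)
      then show "s = t" using zinj st by (auto dest: inj_onD)
    qed
    ultimately show False using no_inj_loop by blast
  qed
  have "range \<gamma> = DC_map a ` sphere 0 r"
  proof
    show "range \<gamma> \<subseteq> DC_map a ` sphere 0 r" using gz r by auto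
    show "DC_map a ` sphere 0 r \<subseteq> range \<gamma>"
    proof
      fix y assume "y \<in> DC_map a ` sphere 0 r"
      then obtain p where "norm p = r" "y = DC_map a p" by auto
      then obtain t where "z t = p" using surj by blast
      then show "y \<in> range \<gamma>" using gz \<open>y = DC_map a p\<close> by (metis rangeI)
    qed
  qed
  then show ?thesis using r(1) by blast
qed
end
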